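(* Let $(B,\lfloor\cdot,\cdot\rfloor)$ be an SSD space with quadratic form $q$ and let $f:B\to\mathbb{R}\cup\{+\infty\}$ be a $w(B,B)$-lower semicontinuous proper convex function with $G_f\neq\emptyset$. Then $G_f$ is $q$-representable.
   Context: An SSD space is a pair $(B,\lfloor\cdot,\cdot\rfloor)$ with $B$ a nonzero real vector space and $\lfloor\cdot,\cdot\rfloor$ a symmetric bilinear form; $q(b)=\frac12\lfloor b,b\rfloor$. $w(B,B)$ is the coarsest topology on $B$ making all maps $b\mapsto\lfloor b,c\rfloor$ continuous. $f^{@}(b)=\sup_{c\in B}\{\lfloor c,b\rfloor-f(c)\}$, $\mathcal{P}_q(g)=\{b: g(b)=q(b)\}$, $G_f=\{b\in B: f(b)+f^{@}(b)=\lfloor b,b\rfloor\}$. A nonempty $A\subset B$ is $q$-positive if $q(b-c)\ge0$ for all $b,c\in A$; a $q$-positive set $A$ is $q$-representable if there exists a $w(B,B)$-lsc proper convex $g:B\to\mathbb{R}\cup\{+\infty\}$ with $g\ge q$ on $B$ and $\mathcal{P}_q(g)=A$. *)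

theory Defs
  imports "HOL-Analysis.Analysis"
begin

definition ssd_space :: "('a::real_vector \<Rightarrow> 'a \<Rightarrow> real) \<Rightarrow> bool" where
  "ssd_space s \<longleftrightarrow> (\<exists>x::'a. x \<noteq> 0)
     \<and> (\<forall>x y. s x y = s y x)
     \<and> (\<forall>x y z. s (x + y) z = s x z + s y z)
     \<and> (\<forall>a x z. s (a *\<^sub>R x) z = a * s x z)"

definition ssd_q :: "('a::real_vector \<Rightarrow> 'a \<Rightarrow> real) \<Rightarrow> 'a \<Rightarrow> real" where
  "ssd_q s b = s b b / 2"

definition wBB :: "('a \<Rightarrow> 'a \<Rightarrow> real) \<Rightarrow> 'a topology" where
  "wBB s = topology_generated_by {{b. s b c \<in> U} | c U. open U}"

definition lsc_on :: "'a topology \<Rightarrow> ('a \<Rightarrow> ereal) \<Rightarrow> bool" where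
  "lsc_on T f \<longleftrightarrow> (\<forall>r::real. closedin T {x \<in> topspace T. f x \<le> ereal r})"

definition proper_fn :: "('a \<Rightarrow> ereal) \<Rightarrow> bool" where
  "proper_fn f \<longleftrightarrow> (\<forall>x. f x \<noteq> -\<infinity>) \<and> (\<exists>x. f x \<noteq> \<infinity>)"

definition convex_fn :: "('a::real_vector \<Rightarrow> ereal) \<Rightarrow> bool" where
  "convex_fn f \<longleftrightarrow> (\<forall>x y t. 0 < t \<and> t < 1 \<longrightarrow>
      f (t *\<^sub>R x + (1 - t) *\<^sub>R y) \<le> ereal t * f x + ereal (1 - t) * f y)"

definition ssd_conj :: "('a \<Rightarrow> 'a \<Rightarrow> real) \<Rightarrow> ('a \<Rightarrow> ereal) \<Rightarrow> 'a \<Rightarrow> ereal" where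
  "ssd_conj s f b = (SUP c. ereal (s c b) - f c)"

definition P_q :: "('a::real_vector \<Rightarrow> 'a \<Rightarrow> real) \<Rightarrow> ('a \<Rightarrow> ereal) \<Rightarrow> 'a set" where
  "P_q s g = {b. g b = ereal (ssd_q s b)}"

definition G_set :: "('a \<Rightarrow> 'a \<Rightarrow> real) \<Rightarrow> ('a \<Rightarrow> ereal) \<Rightarrow> 'a set" where
  "G_set s f = {b. f b + ssd_conj s f b = ereal (s b b)}"

definition q_positive :: "('a::real_vector \<Rightarrow> 'a \<Rightarrow> real) \<Rightarrow> 'a set \<Rightarrow> bool" where
  "q_positive s A \<longleftrightarrow> A \<noteq> {} \<and> (\<forall>b\<in>A. \<forall>c\<in>A. ssd_q s (b - c) \<ge> 0)"

definition q_representable :: "('a::real_vector \<Rightarrow> 'a \<Rightarrow> real) \<Rightarrow> 'a set \<Rightarrow> bool" where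
  "q_representable s A \<longleftrightarrow> q_positive s A \<and>
     (\<exists>g. lsc_on (wBB s) g \<and> proper_fn g \<and> convex_fn g
          \<and> (\<forall>b. g b \<ge> ereal (ssd_q s b)) \<and> P_q s g = A)"

end

theory Submission
  imports Defs
begin

lemma ssd_lin:
  assumes "ssd_space s"
  shows "linear (\<lambda>x. s x z)" "linear (\<lambda>x. s z x)"
proof -
  show L: "linear (\<lambda>x. s x z)"
    using assms unfolding ssd_space_def by (intro linearI) auto
  have "(\<lambda>x. s z x) = (\<lambda>x. s x z)" using assms unfolding ssd_space_def by auto
  then show "linear (\<lambda>x. s z x)" using L by simp
qed

lemma wBB_open:
  "openin (wBB s) {b. s b c \<in> U}" if "open U"
  unfolding wBB_def by (rule topology_generated_by_Basis) (use that in blast)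

lemma wBB_top: "topspace (wBB s) = UNIV"
proof -
  have "UNIV = {b. s b undefined \<in> (UNIV::real set)}" by auto
  then have "UNIV \<in> {{b. s b c \<in> U} | c U. open U}" using open_UNIV by blast
  then show ?thesis unfolding wBB_def topology_generated_by_topspace by blast
qed

lemma lsc_iff:
  "lsc_on T f \<longleftrightarrow> (\<forall>r::real. openin T {x \<in> topspace T. f x > ereal r})"
proof -
  have "{x \<in> topspace T. f x > ereal r} = topspace T - {x \<in> topspace T. f x \<le> ereal r}" for r
    by auto
  then show ?thesis unfolding lsc_on_def closedin_def by auto
qed

lemma conj_ge: "ssd_conj s f b \<ge> ereal (s c b) - f c"
  unfolding ssd_conj_def by (rule SUP_upper) auto

lemma sum_split:
  fixes a b :: ereal
  assumes "a \<noteq> -\<infinity>" "b \<noteq> -\<infinity>" "a + b > ereal r"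
  shows "\<exists>x. a > ereal x \<and> b > ereal (r - x)"
proof (cases a)
  case (real u) note a = this
  then show ?thesis
  proof (cases b)
    case (real v)
    then show ?thesis using a assms by (intro exI[of _ "u - (u+v-r)/2"]) (auto simp: field_simps)
  next
    case PInf then show ?thesis using a by (intro exI[of _ "u - 1"]) auto
  next
    case MInf then show ?thesis using assms by auto
  qed
next
  case PInf
  then show ?thesis
  proof (cases b)
    case (real v)
    then show ?thesis using PInf by (intro exI[of _ "r - v + 1"]) auto
  next
    case PInf then show ?thesis using \<open>a = \<infinity>\<close> by auto
  next
    case MInf then show ?thesis using assms by auto
  qed
next
  case MInf then show ?thesis using assms by auto
qed

lemma lsc_add:
  assumes "lsc_on T f" "lsc_on T k" "\<forall>x. f x \<noteq> -\<infinity>" "\<forall>x. k x \<noteq> -\<infinity>"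
  shows "lsc_on T (\<lambda>x. f x + k x)"
  unfolding lsc_iff
proof
  fix r
  have "{x \<in> topspace T. f x + k x > ereal r} =
    (\<Union>a. {x \<in> topspace T. f x > ereal a} \<inter> {x \<in> topspace T. k x > ereal (r - a)})"
  proof (intro set_eqI iffI)
    fix x assume "x \<in> {x \<in> topspace T. f x + k x > ereal r}"
    then show "x \<in> (\<Union>a. {x \<in> topspace T. f x > ereal a} \<inter> {x \<in> topspace T. k x > ereal (r - a)})"
      using sum_split[of "f x" "k x" r] assms(3,4) by auto
  next
    fix x assume "x \<in> (\<Union>a. {x \<in> topspace T. f x > ereal a} \<inter> {x \<in> topspace T. k x > ereal (r - a)})"
    then obtain a where "x \<in> topspace T" "f x > ereal a" "k x > ereal (r - a)" by auto
    moreover have "ereal a + ereal (r - a) < f x + k x"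
      using calculation by (intro ereal_add_strict_mono2) auto
    ultimately show "x \<in> {x \<in> topspace T. f x + k x > ereal r}" by auto
  qed
  moreover have "openin T ({x \<in> topspace T. f x > ereal a} \<inter> {x \<in> topspace T. k x > ereal (r - a)})" for a
    using assms(1,2) unfolding lsc_iff by auto
  ultimately show "openin T {x \<in> topspace T. f x + k x > ereal r}" by auto
qed

lemma conj_notminf:
  assumes "proper_fn f" shows "ssd_conj s f b \<noteq> -\<infinity>"
proof -
  obtain c where c: "f c \<noteq> \<infinity>" using assms unfolding proper_fn_def by auto
  moreover have "f c \<noteq> -\<infinity>" using assms unfolding proper_fn_def by auto
  ultimately obtain r where "f c = ereal r" by (cases "f c") auto
  then have "ereal (s c b - r) \<le> ssd_conj s f b" using conj_ge[of s c b f] by simp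
  then show ?thesis by auto
qed

lemma fenchel_young:
  assumes "proper_fn f" shows "f b + ssd_conj s f b \<ge> ereal (s b b)"
proof (cases "f b")
  case (real r)
  have "ereal (s b b - r) \<le> ssd_conj s f b" using conj_ge[of s b b f] real by simp
  then show ?thesis using real
    by (cases "ssd_conj s f b") auto
next
  case PInf then show ?thesis using conj_notminf[OF assms, of s b] by auto
next
  case MInf then show ?thesis using assms unfolding proper_fn_def by auto
qed

lemma conj_lsc:
  assumes "ssd_space s" shows "lsc_on (wBB s) (ssd_conj s f)"
  unfolding lsc_iff wBB_top
proof
  fix r
  have "{x \<in> UNIV. ssd_conj s f x > ereal r} = (\<Union>c. {x. ereal (s c x) - f c > ereal r})"
    unfolding ssd_conj_def by (auto simp: less_SUP_iff)
  moreover have "openin (wBB s) {x. ereal (s c x) - f c > ereal r}" for c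
  proof (cases "f c")
    case (real u)
    have sym: "s c x = s x c" for x using assms unfolding ssd_space_def by auto
    have "{x. ereal (s c x) - f c > ereal r} = {x. s x c \<in> {r + u <..}}"
      using real by (auto simp: sym)
    then show ?thesis using wBB_open[of "{r+u<..}" s c] by simp
  next
    case PInf
    then have "{x. ereal (s c x) - f c > ereal r} = {}" by auto
    then show ?thesis by simp
  next
    case MInf
    then have "{x. ereal (s c x) - f c > ereal r} = UNIV" by auto
    then show ?thesis using wBB_top[of s] openin_topspace[of "wBB s"] by simp
  qed
  ultimately show "openin (wBB s) {x \<in> UNIV. ssd_conj s f x > ereal r}" by auto
qed

lemma conj_convex:
  fixes s :: "'a::real_vector \<Rightarrow> 'a \<Rightarrow> real"
  assumes "ssd_space s" shows "convex_fn (ssd_conj s f)"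
  unfolding convex_fn_def
proof (intro allI impI)
  fix x y :: 'a and t :: real assume t: "0 < t \<and> t < 1"
  let ?z = "t *\<^sub>R x + (1 - t) *\<^sub>R y"
  show "ssd_conj s f ?z \<le> ereal t * ssd_conj s f x + ereal (1 - t) * ssd_conj s f y"
    unfolding ssd_conj_def[of s f ?z]
  proof (rule SUP_least)
    fix c
    have lin: "s c ?z = t * s c x + (1 - t) * s c y"
      using ssd_lin(2)[OF assms, of c] by (simp add: linear_add linear_scale)
    show "ereal (s c ?z) - f c \<le> ereal t * ssd_conj s f x + ereal (1 - t) * ssd_conj s f y"
    proof (cases "f c")
      case (real u)
      have "ereal (s c ?z) - f c = ereal t * ereal (s c x - u) + ereal (1 - t) * ereal (s c y - u)"
        using real lin by (simp add: algebra_simps)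
      also have "\<dots> \<le> ereal t * ssd_conj s f x + ereal (1 - t) * ssd_conj s f y"
        using conj_ge[of s c x f] conj_ge[of s c y f] real t
        by (intro add_mono ereal_mult_left_mono) auto
      finally show ?thesis .
    next
      case PInf then show ?thesis by simp
    next
      case MInf
      then have "ssd_conj s f x = \<infinity>" using conj_ge[of s c x f] by simp
      then show ?thesis using t
        by (simp add: ereal_mult_infty)
    qed
  qed
qed

lemma ereal_distr_pos:
  fixes a b :: ereal
  assumes "a \<noteq> -\<infinity>" "b \<noteq> -\<infinity>" "c > 0"
  shows "ereal c * (a + b) = ereal c * a + ereal c * b"
  using assms by (cases a; cases b) (auto simp: algebra_simps)

lemma convex_add:
  fixes f k :: "'a::real_vector \<Rightarrow> ereal"
  assumes "convex_fn f" "convex_fn k" "\<forall>x. f x \<noteq> -\<infinity>" "\<forall>x. k x \<noteq> -\<infinity>"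
  shows "convex_fn (\<lambda>x. f x + k x)"
  unfolding convex_fn_def
proof (intro allI impI)
  fix x y :: 'a and t :: real assume t: "0 < t \<and> t < 1"
  let ?z = "t *\<^sub>R x + (1 - t) *\<^sub>R y"
  have "f ?z + k ?z \<le> (ereal t * f x + ereal (1 - t) * f y) + (ereal t * k x + ereal (1 - t) * k y)"
    using assms(1,2) t unfolding convex_fn_def by (intro add_mono) auto
  also have "\<dots> = ereal t * (f x + k x) + ereal (1 - t) * (f y + k y)"
    using assms(3,4) t by (simp add: ereal_distr_pos add_ac)
  finally show "f ?z + k ?z \<le> ereal t * (f x + k x) + ereal (1 - t) * (f y + k y)" .
qed

lemma convex_half:
  fixes h :: "'a::real_vector \<Rightarrow> ereal"
  assumes "convex_fn h" "\<forall>x. h x \<noteq> -\<infinity>"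
  shows "convex_fn (\<lambda>x. ereal (1/2) * h x)"
  unfolding convex_fn_def
proof (intro allI impI)
  fix x y :: 'a and t :: real assume t: "0 < t \<and> t < 1"
  let ?z = "t *\<^sub>R x + (1 - t) *\<^sub>R y"
  have "ereal (1/2) * h ?z \<le> ereal (1/2) * (ereal t * h x + ereal (1 - t) * h y)"
    using assms(1) t unfolding convex_fn_def by (intro ereal_mult_left_mono) auto
  also have "\<dots> = ereal t * (ereal (1/2) * h x) + ereal (1 - t) * (ereal (1/2) * h y)"
    using assms(2) t by (cases "h x"; cases "h y") (auto simp: algebra_simps ereal_mult_infty field_simps)
  finally show "ereal (1/2) * h ?z \<le> ereal t * (ereal (1/2) * h x) + ereal (1 - t) * (ereal (1/2) * h y)" .
qed

lemma lsc_half: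
  assumes "lsc_on T h" "\<forall>x. h x \<noteq> -\<infinity>"
  shows "lsc_on T (\<lambda>x. ereal (1/2) * h x)"
proof -
  have "ereal (1/2) * h x \<le> ereal r \<longleftrightarrow> h x \<le> ereal (2 * r)" for x r
    using assms(2) by (cases "h x") auto
  then show ?thesis using assms(1) unfolding lsc_on_def by simp
qed

lemma bil_identity:
  fixes s :: "'a::real_vector \<Rightarrow> 'a \<Rightarrow> real"
  assumes "ssd_space s"
  shows "s ((1/2) *\<^sub>R b + (1 - 1/2) *\<^sub>R c) ((1/2) *\<^sub>R b + (1 - 1/2) *\<^sub>R c)
     = (s b b + 2 * s b c + s c c) / 4"
    "s (b - c) (b - c) = s b b - 2 * s b c + s c c"
proof -
  have sym: "s x y = s y x" for x y using assms unfolding ssd_space_def by auto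
  have a1: "s (x + y) z = s x z + s y z" for x y z using linear_add[OF ssd_lin(1)[OF assms]] by blast
  have a2: "s z (x + y) = s z x + s z y" for x y z using linear_add[OF ssd_lin(2)[OF assms]] by blast
  have m1: "s (a *\<^sub>R x) z = a * s x z" for a x z using linear_scale[OF ssd_lin(1)[OF assms]] by simp
  have m2: "s z (a *\<^sub>R x) = a * s z x" for a x z using linear_scale[OF ssd_lin(2)[OF assms]] by simp
  have d1: "s (x - y) z = s x z - s y z" for x y z using linear_diff[OF ssd_lin(1)[OF assms]] by blast
  have d2: "s z (x - y) = s z x - s z y" for x y z using linear_diff[OF ssd_lin(2)[OF assms]] by blast
  show "s ((1/2) *\<^sub>R b + (1 - 1/2) *\<^sub>R c) ((1/2) *\<^sub>R b + (1 - 1/2) *\<^sub>R c)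
     = (s b b + 2 * s b c + s c c) / 4"
    by (simp add: a1 a2 m1 m2 sym[of c b] field_simps)
  show "s (b - c) (b - c) = s b b - 2 * s b c + s c c"
    by (simp add: d1 d2 sym[of c b])
qed

theorem mainTheorem10:
  fixes s :: "'a::real_vector \<Rightarrow> 'a \<Rightarrow> real" and f :: "'a \<Rightarrow> ereal"
  assumes "ssd_space s"
    and "lsc_on (wBB s) f" and "proper_fn f" and "convex_fn f"
    and "G_set s f \<noteq> {}"
  shows "q_representable s (G_set s f)"
proof -
  define h where "h x = f x + ssd_conj s f x" for x
  define g where "g x = ereal (1/2) * h x" for x
  have fnm: "\<forall>x. f x \<noteq> -\<infinity>" using assms(3) unfolding proper_fn_def by auto
  have cnm: "\<forall>x. ssd_conj s f x \<noteq> -\<infinity>" using conj_notminf[OF assms(3)] by auto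
  have hnm: "\<forall>x. h x \<noteq> -\<infinity>" using fnm cnm unfolding h_def by auto
  have hconv: "convex_fn h" unfolding h_def[abs_def]
    by (rule convex_add[OF assms(4) conj_convex[OF assms(1)] fnm cnm])
  have gconv: "convex_fn g" unfolding g_def[abs_def] by (rule convex_half[OF hconv hnm])
  have hlsc: "lsc_on (wBB s) h" unfolding h_def[abs_def]
    by (rule lsc_add[OF assms(2) conj_lsc[OF assms(1)] fnm cnm])
  have glsc: "lsc_on (wBB s) g" unfolding g_def[abs_def] by (rule lsc_half[OF hlsc hnm])
  have hge: "h x \<ge> ereal (s x x)" for x unfolding h_def using fenchel_young[OF assms(3)] by auto
  have gge: "g x \<ge> ereal (ssd_q s x)" for x
  proof -
    have "ereal (1/2) * ereal (s x x) \<le> g x" unfolding g_def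
      by (rule ereal_mult_left_mono[OF hge]) auto
    then show ?thesis unfolding ssd_q_def by simp
  qed
  have geq: "g x = ereal (ssd_q s x) \<longleftrightarrow> x \<in> G_set s f" for x
  proof -
    have "x \<in> G_set s f \<longleftrightarrow> h x = ereal (s x x)" unfolding G_set_def h_def by simp
    moreover have "g x = ereal (ssd_q s x) \<longleftrightarrow> h x = ereal (s x x)"
      unfolding g_def ssd_q_def using hnm by (cases "h x") auto
    ultimately show ?thesis by simp
  qed
  have PG: "P_q s g = G_set s f" unfolding P_q_def using geq by auto
  have gproper: "proper_fn g"
  proof -
    obtain b where "b \<in> G_set s f" using assms(5) by auto
    then have "g b \<noteq> \<infinity>" using geq[of b] by auto
    moreover have "\<forall>x. g x \<noteq> -\<infinity>" unfolding g_def
    proof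
      fix x show "ereal (1/2) * h x \<noteq> -\<infinity>" using hnm by (cases "h x") auto
    qed
    ultimately show ?thesis unfolding proper_fn_def by auto
  qed
  have qpos: "q_positive s (G_set s f)"
    unfolding q_positive_def
  proof (intro conjI ballI)
    show "G_set s f \<noteq> {}" by fact
    fix b c assume b: "b \<in> G_set s f" and c: "c \<in> G_set s f"
    let ?m = "(1/2::real) *\<^sub>R b + (1 - 1/2) *\<^sub>R c"
    have "ereal (ssd_q s ?m) \<le> g ?m" by (rule gge)
    also have "\<dots> \<le> ereal (1/2) * g b + ereal (1 - 1/2) * g c"
      using gconv[unfolded convex_fn_def, rule_format, of "1/2" b c] by simp
    also have "\<dots> = ereal ((ssd_q s b + ssd_q s c) / 2)"
      using geq[of b] geq[of c] b c by (simp add: field_simps)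
    finally have ineq: "ssd_q s ?m \<le> (ssd_q s b + ssd_q s c) / 2" by simp
    then show "ssd_q s (b - c) \<ge> 0"
      using bil_identity[OF assms(1), of b c] unfolding ssd_q_def by simp
  qed
  show ?thesis unfolding q_representable_def
    using qpos glsc gproper gconv gge PG by blast
qed

end
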